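(* Let $P$ be a treetope with base $B$. Then for every face $F$ of $P$ with $\dim F>1$, either $F\subseteq B$, or $F\cap B$ is a facet of $F$ and $F$ is a treetope with base $F\cap B$. In particular, $\dim(F\cap B)\ge \dim F-1$ for every face $F$ of $P$ with $\dim F>1$.
   Context: A polytope is the convex hull of a finite set of points in a Euclidean space; faces, vertices, edges, facets and the graph (1-skeleton) are as usual. A \emph{treetope} is a polytope $P$ together with a distinguished facet $B$ (the \emph{base}) such that every face $F$ of $P$ whose intersection $F\cap B$ consists of at most one point has dimension at most one. *)

theory Defs
  imports "HOL-Analysis.Analysis"
begin

definition treetope :: "'a::euclidean_space set \<Rightarrow> 'a set \<Rightarrow> bool" where
  "treetope P B \<longleftrightarrow> polytope P \<and> B facet_of P \<and>
     (\<forall>F. F face_of P \<and> (F \<inter> B = {} \<or> (\<exists>x. F \<inter> B = {x})) \<longrightarrow> aff_dim F \<le> 1)"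

end

theory Submission
  imports Defs
begin

lemma two_pts_aff_dim:
  fixes G :: "'a::euclidean_space set"
  assumes "u \<in> G" "y \<in> G" "u \<noteq> y"
  shows "aff_dim G \<ge> 1"
proof -
  have "G \<noteq> {}" using assms by auto
  hence "aff_dim G \<noteq> -1" by (simp add: aff_dim_empty)
  moreover have "aff_dim G \<noteq> 0" using assms by (auto simp: aff_dim_eq_0)
  moreover have "aff_dim G \<ge> -1" by (rule aff_dim_geq)
  ultimately show ?thesis by linarith
qed

lemma key:
  fixes P B :: "'a::euclidean_space set"
  assumes T: "treetope P B"
  shows "F face_of P \<Longrightarrow> aff_dim F \<ge> 2 \<Longrightarrow> \<not> F \<subseteq> B \<Longrightarrow> aff_dim (F \<inter> B) = aff_dim F - 1"
proof (induction "nat (aff_dim F)" arbitrary: F rule: less_induct)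
  case less
  have pP: "polytope P" and BP: "B facet_of P"
    and tc: "\<And>F. F face_of P \<Longrightarrow> (F \<inter> B = {} \<or> (\<exists>x. F \<inter> B = {x})) \<Longrightarrow> aff_dim F \<le> 1"
    using T unfolding treetope_def by blast+
  have BfP: "B face_of P" using BP by (simp add: facet_of_def)
  define G where "G = F \<inter> B"
  have FP: "F face_of P" by fact
  have GP: "G face_of P" unfolding G_def using FP BfP by (rule face_of_Int)
  have GF: "G face_of F" using face_of_subset[OF GP] face_of_imp_subset[OF FP] G_def by auto
  have pF: "polytope F" using face_of_polytope_polytope[OF pP FP] .
  have cF: "convex F" using pF by (rule polytope_imp_convex)
  have GneF: "G \<noteq> F" using less.prems(3) G_def by auto
  have ltG: "aff_dim G < aff_dim F" using face_of_aff_dim_lt[OF cF GF GneF] .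
  have notsmall: "\<not> (G = {} \<or> (\<exists>x. G = {x}))"
    using tc[OF FP] less.prems(2) G_def by force
  have pG: "polytope G" using face_of_polytope_polytope[OF pF GF] .
  have Gne: "G \<noteq> {}" using notsmall by auto
  obtain u where u: "u extreme_point_of G"
    using extreme_point_exists_convex[OF polytope_imp_compact[OF pG] polytope_imp_convex[OF pG] Gne] by blast
  have uG: "u \<in> G" using u by (simp add: extreme_point_of_def)
  obtain y where yG: "y \<in> G" and yu: "y \<noteq> u" using notsmall uG by blast
  have dG1: "aff_dim G \<ge> 1" using two_pts_aff_dim[OF uG yG] yu by auto
  show ?case
  proof (rule ccontr)
    assume ne: "aff_dim (F \<inter> B) \<noteq> aff_dim F - 1"
    hence small: "aff_dim G \<le> aff_dim F - 2" using ltG G_def by simp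
    have uF: "{u} face_of F" using face_of_trans[OF iffD2[OF face_of_singleton u] GF] .
    have uneF: "{u} \<noteq> F" using less.prems(2) by auto
    have phF: "polyhedron F" using pF by (rule polytope_imp_polyhedron)
    have "{u} = \<Inter>{E. E facet_of F \<and> {u} \<subseteq> E}"
      by (rule face_of_polyhedron[OF phF uF _ uneF]) simp
    then obtain E where EF: "E facet_of F" and yE: "y \<notin> E"
      using yu by blast
    have EfF: "E face_of F" and dE: "aff_dim E = aff_dim F - 1"
      using EF by (auto simp: facet_of_def)
    have EP: "E face_of P" using face_of_trans[OF EfF FP] .
    have EnB: "\<not> E \<subseteq> B"
    proof
      assume "E \<subseteq> B"
      hence "E \<subseteq> G" using face_of_imp_subset[OF EfF] G_def by auto
      hence "aff_dim E \<le> aff_dim G" by (rule aff_dim_subset)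
      thus False using dE small by simp
    qed
    have dE2: "aff_dim E \<ge> 2" using dE small dG1 by simp
    have "nat (aff_dim E) < nat (aff_dim F)" using dE dE2 by simp
    hence IH: "aff_dim (E \<inter> B) = aff_dim E - 1"
      using less.hyps EP dE2 EnB by blast
    have EBP: "(E \<inter> B) face_of P" using EP BfP by (rule face_of_Int)
    have EBG: "(E \<inter> B) face_of G"
    proof (rule face_of_subset[OF EBP])
      show "E \<inter> B \<subseteq> G" using face_of_imp_subset[OF EfF] G_def by auto
      show "G \<subseteq> P" using face_of_imp_subset[OF GP] .
    qed
    have "E \<inter> B = G"
    proof (rule ccontr)
      assume "E \<inter> B \<noteq> G"
      hence "aff_dim (E \<inter> B) < aff_dim G"
        using face_of_aff_dim_lt[OF polytope_imp_convex[OF pG] EBG] by simp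
      thus False using IH dE small by simp
    qed
    thus False using yG yE by auto
  qed
qed

theorem mainTheorem3:
  fixes P B :: "'a::euclidean_space set"
  assumes "treetope P B"
  shows "\<forall>F. F face_of P \<and> aff_dim F > 1 \<longrightarrow>
           (F \<subseteq> B \<or> ((F \<inter> B) facet_of F \<and> treetope F (F \<inter> B)))
           \<and> aff_dim (F \<inter> B) \<ge> aff_dim F - 1"
proof (intro allI impI)
  fix F assume H: "F face_of P \<and> aff_dim F > 1"
  have pP: "polytope P" and BP: "B facet_of P"
    and tc: "\<And>F. F face_of P \<Longrightarrow> (F \<inter> B = {} \<or> (\<exists>x. F \<inter> B = {x})) \<Longrightarrow> aff_dim F \<le> 1"
    using assms unfolding treetope_def by blast+
  have BfP: "B face_of P" using BP by (simp add: facet_of_def)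
  have FP: "F face_of P" and d2: "aff_dim F \<ge> 2" using H by auto
  show "(F \<subseteq> B \<or> ((F \<inter> B) facet_of F \<and> treetope F (F \<inter> B)))
           \<and> aff_dim (F \<inter> B) \<ge> aff_dim F - 1"
  proof (cases "F \<subseteq> B")
    case True
    hence "F \<inter> B = F" by auto
    thus ?thesis using True by simp
  next
    case False
    have dim: "aff_dim (F \<inter> B) = aff_dim F - 1" using key[OF assms FP d2 False] .
    have GF: "(F \<inter> B) face_of F"
      using face_of_subset[OF face_of_Int[OF FP BfP]] face_of_imp_subset[OF FP] by auto
    have ne: "F \<inter> B \<noteq> {}" using dim d2 by auto
    have fac: "(F \<inter> B) facet_of F" using GF ne dim by (simp add: facet_of_def)
    have "treetope F (F \<inter> B)"
      unfolding treetope_def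
    proof (intro conjI allI impI)
      show "polytope F" using face_of_polytope_polytope[OF pP FP] .
      show "(F \<inter> B) facet_of F" by fact
    next
      fix F' assume h: "F' face_of F \<and> (F' \<inter> (F \<inter> B) = {} \<or> (\<exists>x. F' \<inter> (F \<inter> B) = {x}))"
      have F'P: "F' face_of P" using face_of_trans h FP by blast
      have "F' \<inter> (F \<inter> B) = F' \<inter> B" using face_of_imp_subset h by blast
      thus "aff_dim F' \<le> 1" using tc[OF F'P] h by auto
    qed
    thus ?thesis using fac dim by simp
  qed
qed

end
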